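(* Let $\mathcal{N}=\{1,\dots,n\}$ be a finite set of agents, $\mathcal{S}$ a finite global state space and $\mathcal{A}=\prod_{i\in\mathcal{N}}\mathcal{A}_i$ a finite joint action space, where each global state $\mathbf{s}$ determines local states $s_i$ and each joint action is $\mathbf{a}=(a_1,\dots,a_n)$. Let $\alpha\ge0$, $\gamma\in[0,1)$, let $\phi^*_0,\phi^*_1,\dots,\phi^*_n\in\mathbb{R}$, and for each $i$ let $\nu^*_i(s_i)$ and $q^*_i(s_i,a_i)$ be real-valued local value and $Q$-functions. Suppose the weight function is $$w^{\text{tot}}_{\boldsymbol{\nu}^*}(\mathbf{s},\mathbf{a})=e^{-1}\exp\Big(\frac{1}{1+\alpha}\Big(\sum_{i\in\mathcal{N}}\phi^*_i\big(q^*_i(s_i,a_i)-\nu^*_i(s_i)\big)+\gamma\phi^*_0\Big)\Big).$$ Let $\rho^U_{\text{tot}}(\mathbf{s},\mathbf{a})=d^U(\mathbf{s})\,\mu^U(\mathbf{a}\mid\mathbf{s})$ be the state-action distribution of the union dataset, with joint behavior policy $\mu^U$, and assume $\mu^U$ is decomposable into local behavior policies: $\mu^U(\mathbf{a}\mid\mathbf{s})=\prod_{i\in\mathcal{N}}\mu^U_i(a_i\mid s_i)$. Let $\pi_i^*$ be an optimal solution to the local weighted behavior cloning objective $$\max_{\pi_i}\ \mathbb{E}_{(\mathbf{s},\mathbf{a})\sim\rho^U_{\text{tot}}}\big[w^{\text{tot}}_{\boldsymbol{\nu}^*}(\mathbf{s},\mathbf{a})\log\pi_i(a_i\mid s_i)\big].$$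 Then $$\pi^*_i(a_i\mid s_i)=\frac{1}{\Delta(s_i)}\exp\Big(\frac{\phi^*_i}{1+\alpha}\,q^*_i(s_i,a_i)+\log\mu^U_i(a_i\mid s_i)\Big),\quad \Delta(s_i)=\sum_{a_i\in\mathcal{A}_i}\exp\Big(\frac{\phi^*_i}{1+\alpha}\,q^*_i(s_i,a_i)+\log\mu^U_i(a_i\mid s_i)\Big).$$
   Context: In the paper, $\boldsymbol{\nu}^*=\{\nu^*_i\}$ and $\phi^*$ are optimal parameters of a linear mixing $\nu^{\text{tot}*}(\mathbf{s})=\sum_i\phi^*_i\nu^*_i(s_i)+\phi^*_0$ of local value functions; the reward $r(\mathbf{s},\mathbf{a})=\log(\rho^E_{\text{tot}}/\rho^U_{\text{tot}})$ is assumed to decompose as $\sum_i\phi^*_i r_i(s_i,a_i)+\phi^*_0$; and $q^*_i(s_i,a_i)=r_i(s_i,a_i)+\gamma\,\mathbb{E}_{s_i'\mid s_i,a_i}[\nu^*_i(s_i')]$. Under these assumptions the weight $w^{\text{tot}}_{\boldsymbol{\nu}^*}=\exp(A^{\text{tot}}_{\boldsymbol{\nu}^*}/(1+\alpha)-1)$ takes the displayed decomposed form, which is what the statement uses. $\Delta(s_i)$ is the normalization constant. *)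

theory Defs
  imports Complex_Main "HOL-Library.FuncSet"
begin

text \<open>A local policy of an agent with local action set A: for every local state
  it is a strictly positive probability distribution over A (strict positivity
  is needed so that log pi is finite, as the objective uses log pi).\<close>
definition local_policy :: "'a set \<Rightarrow> ('l \<Rightarrow> 'a \<Rightarrow> real) \<Rightarrow> bool" where
  "local_policy A p \<longleftrightarrow> (\<forall>sl. (\<forall>b\<in>A. p sl b > 0) \<and> (\<Sum>b\<in>A. p sl b) = 1)"

abbreviation joint_actions :: "nat \<Rightarrow> (nat \<Rightarrow> 'a set) \<Rightarrow> (nat \<Rightarrow> 'a) set" where
  "joint_actions n A \<equiv> PiE {1..n} A"

definition wbc_objective ::
  "nat \<Rightarrow> 's set \<Rightarrow> (nat \<Rightarrow> 'a set) \<Rightarrow> (nat \<Rightarrow> 's \<Rightarrow> 'l) \<Rightarrow> ('s \<Rightarrow> (nat \<Rightarrow> 'a) \<Rightarrow> real)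
   \<Rightarrow> ('s \<Rightarrow> (nat \<Rightarrow> 'a) \<Rightarrow> real) \<Rightarrow> nat \<Rightarrow> ('l \<Rightarrow> 'a \<Rightarrow> real) \<Rightarrow> real" where
  "wbc_objective n S A loc rhoU w i p =
     (\<Sum>s\<in>S. \<Sum>a\<in>joint_actions n A. rhoU s a * w s a * ln (p (loc i s) (a i)))"

end

theory Submission imports Defs begin
lemma sum_PiE_prod_factor:
  fixes h :: "nat \<Rightarrow> 'a \<Rightarrow> real"
  assumes "finite I" "i \<in> I" "\<forall>j\<in>I. finite (B j)"
  shows "(\<Sum>a\<in>PiE I B. (\<Prod>j\<in>I. h j (a j)) * D (a i)) =
     (\<Sum>x\<in>B i. h i x * D x) * (\<Prod>j\<in>I-{i}. \<Sum>x\<in>B j. h j x)"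
proof -
  define h' where "h' j x = (if j = i then h j x * D x else h j x)" for j x
  have 1: "(\<Prod>j\<in>I. h j (a j)) * D (a i) = (\<Prod>j\<in>I. h' j (a j))" for a
  proof -
    have "(\<Prod>j\<in>I. h' j (a j)) = h' i (a i) * (\<Prod>j\<in>I-{i}. h' j (a j))"
      using assms by (simp add: prod.remove)
    also have "(\<Prod>j\<in>I-{i}. h' j (a j)) = (\<Prod>j\<in>I-{i}. h j (a j))"
      by (rule prod.cong) (auto simp: h'_def)
    also have "(\<Prod>j\<in>I. h j (a j)) = h i (a i) * (\<Prod>j\<in>I-{i}. h j (a j))"
      using assms by (simp add: prod.remove)
    ultimately show ?thesis by (simp add: h'_def)
  qed
  have "(\<Sum>a\<in>PiE I B. (\<Prod>j\<in>I. h j (a j)) * D (a i)) = (\<Sum>a\<in>PiE I B. \<Prod>j\<in>I. h' j (a j))"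
    using 1 by simp
  also have "\<dots> = (\<Prod>j\<in>I. \<Sum>x\<in>B j. h' j x)"
    using assms by (simp add: prod_sum_PiE)
  also have "\<dots> = (\<Sum>x\<in>B i. h' i x) * (\<Prod>j\<in>I-{i}. \<Sum>x\<in>B j. h' j x)"
    using assms by (simp add: prod.remove)
  also have "(\<Prod>j\<in>I-{i}. \<Sum>x\<in>B j. h' j x) = (\<Prod>j\<in>I-{i}. \<Sum>x\<in>B j. h j x)"
    by (rule prod.cong) (auto simp: h'_def)
  finally show ?thesis by (simp add: h'_def)
qed
theorem proposition5:
  fixes n :: nat and S :: "'s set" and loc :: "nat \<Rightarrow> 's \<Rightarrow> 'l"
    and A :: "nat \<Rightarrow> 'a set"
    and \<alpha> \<gamma> :: real and \<phi> :: "nat \<Rightarrow> real"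
    and \<nu> :: "nat \<Rightarrow> 'l \<Rightarrow> real" and q :: "nat \<Rightarrow> 'l \<Rightarrow> 'a \<Rightarrow> real"
    and w :: "'s \<Rightarrow> (nat \<Rightarrow> 'a) \<Rightarrow> real"
    and dU :: "'s \<Rightarrow> real" and muU :: "'s \<Rightarrow> (nat \<Rightarrow> 'a) \<Rightarrow> real"
    and rhoU :: "'s \<Rightarrow> (nat \<Rightarrow> 'a) \<Rightarrow> real"
    and mu :: "nat \<Rightarrow> 'l \<Rightarrow> 'a \<Rightarrow> real"
    and i :: nat and \<pi> :: "'l \<Rightarrow> 'a \<Rightarrow> real"
    and s :: 's and ai :: 'a
  assumes finS: "finite S"
    and finA: "\<forall>j\<in>{1..n}. finite (A j) \<and> A j \<noteq> {}"
    and alpha: "\<alpha> \<ge> 0"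
    and gamma: "0 \<le> \<gamma>" "\<gamma> < 1"
    and w_form: "\<forall>s'\<in>S. \<forall>a\<in>joint_actions n A.
        w s' a = exp (-1) * exp ((1 / (1 + \<alpha>)) *
          ((\<Sum>j\<in>{1..n}. \<phi> j * (q j (loc j s') (a j) - \<nu> j (loc j s'))) + \<gamma> * \<phi> 0))"
    and dU_dist: "\<forall>s'\<in>S. dU s' \<ge> 0" "(\<Sum>s'\<in>S. dU s') = 1"
    and rhoU_def: "\<forall>s'\<in>S. \<forall>a\<in>joint_actions n A. rhoU s' a = dU s' * muU s' a"
    and muU_dec: "\<forall>s'\<in>S. \<forall>a\<in>joint_actions n A.
        muU s' a = (\<Prod>j\<in>{1..n}. mu j (loc j s') (a j))"
    and mu_local: "\<forall>j\<in>{1..n}. local_policy (A j) (mu j)"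
    and agent: "i \<in> {1..n}"
    and pi_feasible: "local_policy (A i) \<pi>"
    and pi_opt: "\<forall>p. local_policy (A i) p \<longrightarrow>
        wbc_objective n S A loc rhoU w i p \<le> wbc_objective n S A loc rhoU w i \<pi>"
    and s_supp: "s \<in> S" "dU s > 0"
    and ai_in: "ai \<in> A i"
  shows "\<pi> (loc i s) ai =
     exp (\<phi> i / (1 + \<alpha>) * q i (loc i s) ai + ln (mu i (loc i s) ai)) /
     (\<Sum>b\<in>A i. exp (\<phi> i / (1 + \<alpha>) * q i (loc i s) b + ln (mu i (loc i s) b)))"
proof -
  define c where "c = 1 / (1 + \<alpha>)"
  have c_pos: "c > 0" using alpha by (simp add: c_def)
  define l0 where "l0 = loc i s"
  define f where "f b = exp (\<phi> i / (1 + \<alpha>) * q i l0 b + ln (mu i l0 b))" for b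
  define Z where "Z = (\<Sum>b\<in>A i. f b)"
  define g where "g b = f b / Z" for b
  define p' where "p' sl b = (if sl = l0 then g b else \<pi> sl b)" for sl b
  have finAi: "finite (A i)" "A i \<noteq> {}" using finA agent by auto
  have mu_pos: "\<And>j x sl. j \<in> {1..n} \<Longrightarrow> x \<in> A j \<Longrightarrow> mu j sl x > 0"
    using mu_local unfolding local_policy_def by blast
  have mu_i_pos: "b \<in> A i \<Longrightarrow> mu i l0 b > 0" for b using mu_pos agent by blast
  have f_pos: "f b > 0" for b unfolding f_def by simp
  have Z_pos: "Z > 0" unfolding Z_def using finAi f_pos by (intro sum_pos) auto
  have g_pos: "g b > 0" for b unfolding g_def using f_pos Z_pos by simp
  have g_sum: "(\<Sum>b\<in>A i. g b) = 1"
    unfolding g_def using Z_pos by (simp add: Z_def sum_divide_distrib[symmetric])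
  have pi_pos: "\<And>sl b. b \<in> A i \<Longrightarrow> \<pi> sl b > 0" and pi_sum: "\<And>sl. (\<Sum>b\<in>A i. \<pi> sl b) = 1"
    using pi_feasible unfolding local_policy_def by auto
  have p'_pol: "local_policy (A i) p'"
    unfolding local_policy_def
  proof (intro allI conjI)
    fix sl
    show "\<forall>b\<in>A i. 0 < p' sl b" using g_pos pi_pos by (simp add: p'_def)
    show "(\<Sum>b\<in>A i. p' sl b) = 1"
      by (cases "sl = l0") (simp_all add: p'_def g_sum pi_sum)
  qed
  have opt: "wbc_objective n S A loc rhoU w i p' \<le> wbc_objective n S A loc rhoU w i \<pi>"
    using pi_opt p'_pol by blast
  define hh where "hh s' j x = mu j (loc j s') x * exp (c * (\<phi> j * (q j (loc j s') x - \<nu> j (loc j s'))))"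
    for s' j x
  define E where "E s' = dU s' * exp (-1) * exp (c * (\<gamma> * \<phi> 0))" for s'
  define R where "R s' = (\<Prod>j\<in>{1..n}-{i}. \<Sum>x\<in>A j. hh s' j x)" for s'
  have Wfact: "rhoU s' a * w s' a = E s' * (\<Prod>j\<in>{1..n}. hh s' j (a j))"
    if "s' \<in> S" "a \<in> joint_actions n A" for s' a
  proof -
    have "exp (c * ((\<Sum>j\<in>{1..n}. \<phi> j * (q j (loc j s') (a j) - \<nu> j (loc j s'))) + \<gamma> * \<phi> 0))
       = exp (\<Sum>j\<in>{1..n}. c * (\<phi> j * (q j (loc j s') (a j) - \<nu> j (loc j s')))) * exp (c * (\<gamma> * \<phi> 0))"
      by (simp add: distrib_left sum_distrib_left exp_add)
    also have "exp (\<Sum>j\<in>{1..n}. c * (\<phi> j * (q j (loc j s') (a j) - \<nu> j (loc j s'))))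
       = (\<Prod>j\<in>{1..n}. exp (c * (\<phi> j * (q j (loc j s') (a j) - \<nu> j (loc j s')))))"
      by (simp add: exp_sum)
    finally have e: "exp (c * ((\<Sum>j\<in>{1..n}. \<phi> j * (q j (loc j s') (a j) - \<nu> j (loc j s'))) + \<gamma> * \<phi> 0))
       = (\<Prod>j\<in>{1..n}. exp (c * (\<phi> j * (q j (loc j s') (a j) - \<nu> j (loc j s'))))) * exp (c * (\<gamma> * \<phi> 0))" .
    have "rhoU s' a * w s' a = dU s' * (\<Prod>j\<in>{1..n}. mu j (loc j s') (a j)) * (exp (-1) *
       ((\<Prod>j\<in>{1..n}. exp (c * (\<phi> j * (q j (loc j s') (a j) - \<nu> j (loc j s'))))) * exp (c * (\<gamma> * \<phi> 0))))"
      using that rhoU_def muU_dec w_form e unfolding c_def by simp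
    also have "\<dots> = E s' * (\<Prod>j\<in>{1..n}. hh s' j (a j))"
      unfolding E_def hh_def prod.distrib by simp
    finally show ?thesis .
  qed
  have key: "(\<Sum>a\<in>joint_actions n A. rhoU s' a * w s' a * D (a i)) = E s' * (\<Sum>x\<in>A i. hh s' i x * D x) * R s'"
    if "s' \<in> S" for s' and D :: "'a \<Rightarrow> real"
  proof -
    have "(\<Sum>a\<in>joint_actions n A. rhoU s' a * w s' a * D (a i))
        = (\<Sum>a\<in>joint_actions n A. E s' * ((\<Prod>j\<in>{1..n}. hh s' j (a j)) * D (a i)))"
      using Wfact[OF that] by (intro sum.cong) auto
    also have "\<dots> = E s' * (\<Sum>a\<in>joint_actions n A. (\<Prod>j\<in>{1..n}. hh s' j (a j)) * D (a i))"
      by (simp add: sum_distrib_left)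
    also have "\<dots> = E s' * ((\<Sum>x\<in>A i. hh s' i x * D x) * R s')"
      unfolding R_def using agent finA by (subst sum_PiE_prod_factor) auto
    finally show ?thesis by simp
  qed
  define K where "K s' = E s' * exp (- (c * (\<phi> i * \<nu> i l0))) * R s'" for s'
  have hh_i: "hh s' i x = f x * exp (- (c * (\<phi> i * \<nu> i l0)))" if "loc i s' = l0" "x \<in> A i" for s' x
  proof -
    have "f x = exp (\<phi> i / (1 + \<alpha>) * q i l0 x) * mu i l0 x"
      unfolding f_def using mu_i_pos[OF that(2)] by (simp add: exp_add)
    moreover have "exp (c * (\<phi> i * (q i l0 x - \<nu> i l0))) = exp (\<phi> i / (1 + \<alpha>) * q i l0 x) * exp (- (c * (\<phi> i * \<nu> i l0)))"
      unfolding c_def by (simp add: exp_add[symmetric] algebra_simps)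
    ultimately show ?thesis unfolding hh_def using that by simp
  qed
  define D where "D b = ln (g b) - ln (\<pi> l0 b)" for b
  define G where "G = (\<Sum>b\<in>A i. f b * D b)"
  have per_s: "(\<Sum>a\<in>joint_actions n A. rhoU s' a * w s' a * ln (p' (loc i s') (a i)))
      - (\<Sum>a\<in>joint_actions n A. rhoU s' a * w s' a * ln (\<pi> (loc i s') (a i)))
      = (if loc i s' = l0 then K s' else 0) * G" if "s' \<in> S" for s'
  proof (cases "loc i s' = l0")
    case True
    have "(\<Sum>a\<in>joint_actions n A. rhoU s' a * w s' a * ln (p' (loc i s') (a i)))
      - (\<Sum>a\<in>joint_actions n A. rhoU s' a * w s' a * ln (\<pi> (loc i s') (a i)))
      = (\<Sum>a\<in>joint_actions n A. rhoU s' a * w s' a * D (a i))"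
      using True by (simp add: sum_subtractf[symmetric] p'_def D_def algebra_simps)
    also have "\<dots> = E s' * (\<Sum>x\<in>A i. hh s' i x * D x) * R s'" by (rule key[OF that])
    also have "(\<Sum>x\<in>A i. hh s' i x * D x) = exp (- (c * (\<phi> i * \<nu> i l0))) * G"
      unfolding G_def sum_distrib_left using hh_i[OF True] by (intro sum.cong) auto
    finally show ?thesis using True unfolding K_def by simp
  next
    case False
    then show ?thesis by (simp add: p'_def)
  qed
  define Kt where "Kt = (\<Sum>s'\<in>S. if loc i s' = l0 then K s' else 0)"
  have diff: "wbc_objective n S A loc rhoU w i p' - wbc_objective n S A loc rhoU w i \<pi> = Kt * G"
  proof -
    have "wbc_objective n S A loc rhoU w i p' - wbc_objective n S A loc rhoU w i \<pi>
      = (\<Sum>s'\<in>S. (\<Sum>a\<in>joint_actions n A. rhoU s' a * w s' a * ln (p' (loc i s') (a i)))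
      - (\<Sum>a\<in>joint_actions n A. rhoU s' a * w s' a * ln (\<pi> (loc i s') (a i))))"
      unfolding wbc_objective_def by (rule sum_subtractf[symmetric])
    also have "\<dots> = (\<Sum>s'\<in>S. (if loc i s' = l0 then K s' else 0) * G)"
      using per_s by (intro sum.cong) blast+
    also have "\<dots> = Kt * G" unfolding Kt_def by (simp add: sum_distrib_right)
    finally show ?thesis .
  qed
  have hh_pos: "hh s' j x > 0" if "j \<in> {1..n}" "x \<in> A j" for s' j x
    unfolding hh_def using mu_pos[OF that, of "loc j s'"] by simp
  have hh_nn: "hh s' j x \<ge> 0" if "j \<in> {1..n}" "x \<in> A j" for s' j x
    using less_imp_le[OF hh_pos[OF that]] .
  have R_nn: "R s' \<ge> 0" for s'
    unfolding R_def using hh_nn by (intro prod_nonneg sum_nonneg) auto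
  have R_pos: "R s' > 0" for s'
    unfolding R_def using hh_pos finA by (intro prod_pos sum_pos) auto
  have K_nn: "s' \<in> S \<Longrightarrow> K s' \<ge> 0" for s'
    unfolding K_def E_def using dU_dist(1) R_nn by simp
  have Ks_pos: "K s > 0"
    unfolding K_def E_def using s_supp R_pos by simp
  have "K s \<le> Kt"
  proof -
    have "K s = (if loc i s = l0 then K s else 0)" by (simp add: l0_def)
    also have "\<dots> \<le> Kt" unfolding Kt_def
      by (rule member_le_sum) (use s_supp finS K_nn in auto)
    finally show ?thesis .
  qed
  with Ks_pos have Kt_pos: "Kt > 0" by simp
  have "Kt * G \<le> 0" using diff opt by simp
  hence G_le: "G \<le> 0" using Kt_pos by (simp add: mult_le_0_iff)
  have G_eq: "G = Z * (\<Sum>b\<in>A i. g b * D b)"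
    unfolding G_def g_def sum_distrib_left using Z_pos by (intro sum.cong) auto
  have sgD: "(\<Sum>b\<in>A i. g b * D b) \<le> 0"
    using G_le G_eq Z_pos by (simp add: mult_le_0_iff)
  define t where "t b = \<pi> l0 b - g b - g b * (ln (\<pi> l0 b) - ln (g b))" for b
  have t_nn: "t b \<ge> 0" if "b \<in> A i" for b
  proof -
    have "ln (\<pi> l0 b) - ln (g b) \<le> (\<pi> l0 b - g b) / g b"
      using ln_diff_le[OF pi_pos[OF that] g_pos] .
    hence "g b * (ln (\<pi> l0 b) - ln (g b)) \<le> \<pi> l0 b - g b"
      using g_pos[of b] by (simp add: field_simps)
    thus ?thesis unfolding t_def by simp
  qed
  have "(\<Sum>b\<in>A i. t b) = (\<Sum>b\<in>A i. \<pi> l0 b) - (\<Sum>b\<in>A i. g b) + (\<Sum>b\<in>A i. g b * D b)"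
    unfolding t_def D_def by (simp add: sum_subtractf sum.distrib algebra_simps)
  also have "\<dots> \<le> 0" using pi_sum g_sum sgD by simp
  finally have "(\<Sum>b\<in>A i. t b) = 0" using sum_nonneg[of "A i" t] t_nn by force
  hence "t ai = 0" using sum_nonneg_eq_0_iff[OF finAi(1)] t_nn ai_in by blast
  hence "\<pi> l0 ai - g ai = g ai * (ln (\<pi> l0 ai) - ln (g ai))" unfolding t_def by simp
  hence "ln (\<pi> l0 ai) - ln (g ai) = \<pi> l0 ai / g ai - 1"
    using g_pos[of ai] by (simp add: field_simps)
  hence "ln (\<pi> l0 ai / g ai) = \<pi> l0 ai / g ai - 1"
    using g_pos[of ai] pi_pos[OF ai_in, of l0] by (simp add: ln_div)
  hence "\<pi> l0 ai / g ai = 1"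
    using g_pos[of ai] pi_pos[OF ai_in] by (intro ln_eq_minus_one) auto
  hence "\<pi> l0 ai = g ai" using g_pos[of ai] by (simp add: field_simps)
  thus ?thesis unfolding g_def f_def Z_def l0_def by simp
qed
end
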